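(* Let $\mathcal{E}=(\mathcal{O},\mathcal{A},\mathcal{T})$ be an environment, $\delta\in\mathbb{N}$, and let $\mathcal{S}h$ be a shield such that $\Pi_{\mathcal{S}h}\subseteq\Pi^{\text{clock}}_\delta$. Then $\mathcal{S}h$ is agnostic to the last $\delta$ observations: for all $\tau\in(\mathcal{O}\times\mathcal{A})^*$, all $(a_1,\dots,a_{\delta-1})\in\mathcal{A}^{\delta-1}$ and all $(o_1,\dots,o_\delta),(o'_1,\dots,o'_\delta)\in\mathcal{O}^\delta$: (1) if $\mathcal{S}h$ is a pre-shield, then $\mathcal{S}h(\tau\cdot(o_1,a_1)\cdots(o_{\delta-1},a_{\delta-1}),o_\delta)=\mathcal{S}h(\tau\cdot(o'_1,a_1)\cdots(o'_{\delta-1},a_{\delta-1}),o'_\delta)$; (2) if $\mathcal{S}h$ is a post-shield, then for every $a_\delta\in\mathcal{A}$, $\mathcal{S}h(\tau\cdot(o_1,a_1)\cdots(o_{\delta-1},a_{\delta-1}),o_\delta,a_\delta)=\mathcal{S}h(\tau\cdot(o'_1,a_1)\cdots(o'_{\delta-1},a_{\delta-1}),o'_\delta,a_\delta)$.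
   Context: Observations $\mathcal{O}$, actions $\mathcal{A}$; an environment is $(\mathcal{O},\mathcal{A},\mathcal{T})$ with $\mathcal{T}:(\mathcal{O}\times\mathcal{A})^*\to\mathcal{D}(\mathcal{O})$; an agent is $\mathrm{Ag}:(\mathcal{O}\times\mathcal{A})^*\times\mathcal{O}\to\mathcal{D}(\mathcal{A})$. $\Pi^{\text{clock}}_\delta$ is the set of agents agnostic to the last $\delta$ observations: $\mathrm{Ag}(\tau\cdot(o_1,a_1)\cdots(o_{\delta-1},a_{\delta-1}),o_\delta)=\mathrm{Ag}(\tau\cdot(o'_1,a_1)\cdots(o'_{\delta-1},a_{\delta-1}),o'_\delta)$ for all $\tau$, all $a_1,\dots,a_{\delta-1}$ and all $o_i,o'_i$. A pre-shield is $\mathcal{S}h:(\mathcal{O}\times\mathcal{A})^*\times\mathcal{O}\to 2^{\mathcal{A}}$; a post-shield is $\mathcal{S}h:(\mathcal{O}\times\mathcal{A})^*\times\mathcal{O}\times\mathcal{A}\to\mathcal{A}$. The pre-shield induced by an agent $\mathrm{Ag}$ is $(\tau,o)\mapsto\mathrm{Supp}(\mathrm{Ag}(\tau,o))$. A determinization of $\mathrm{Ag}$ is a deterministic agent $\mathrm{Ag}_{det}$ with $\mathrm{Ag}_{det}(\tau,o)\in\mathrm{Supp}(\mathrm{Ag}(\tau,o))$; the post-shield induced by $(\mathrm{Ag},\mathrm{Ag}_{det})$ maps $(\tau,o,a)$ to $a$ if $a\in\mathrm{Supp}(\mathrm{Ag}(\tau,o))$ and to $\mathrm{Ag}_{det}(\tau,o)$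 otherwise. $\Pi_{\mathcal{S}h}$ (agents associated with $\mathcal{S}h$) is the set of agents whose induced pre-shield equals $\mathcal{S}h$ (for a pre-shield), resp. which have a determinization whose induced post-shield equals $\mathcal{S}h$ (for a post-shield).
   Formalization: In both parts, $\Pi_{\mathcal{S}h}$ is also assumed nonempty, so $\mathcal{S}h$ is induced by at least one agent (with a determinization, for a post-shield). The statement above fails without it. *)

theory Defs
  imports "HOL-Probability.Probability_Mass_Function"
begin

type_synonym ('o, 'a) agent = "('o \<times> 'a) list \<Rightarrow> 'o \<Rightarrow> 'a pmf"
type_synonym ('o, 'a) det_agent = "('o \<times> 'a) list \<Rightarrow> 'o \<Rightarrow> 'a"
type_synonym ('o, 'a) pre_shield = "('o \<times> 'a) list \<Rightarrow> 'o \<Rightarrow> 'a set"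
type_synonym ('o, 'a) post_shield = "('o \<times> 'a) list \<Rightarrow> 'o \<Rightarrow> 'a \<Rightarrow> 'a"

text \<open>Agents agnostic to the last delta observations: the history suffix
  (o_1,a_1)...(o_{delta-1},a_{delta-1}) is zip os as with length delta-1,
  and o_delta is the current observation.\<close>
definition clock_agents :: "nat \<Rightarrow> ('o, 'a) agent set" where
  "clock_agents \<delta> = {Ag. \<forall>\<tau> as os os' ob ob'.
      length as = \<delta> - 1 \<longrightarrow> length os = \<delta> - 1 \<longrightarrow> length os' = \<delta> - 1 \<longrightarrow>
      Ag (\<tau> @ zip os as) ob = Ag (\<tau> @ zip os' as) ob'}"

definition induced_pre_shield :: "('o, 'a) agent \<Rightarrow> ('o, 'a) pre_shield" where
  "induced_pre_shield Ag = (\<lambda>\<tau> ob. set_pmf (Ag \<tau> ob))"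

definition is_determinization :: "('o, 'a) agent \<Rightarrow> ('o, 'a) det_agent \<Rightarrow> bool" where
  "is_determinization Ag d \<longleftrightarrow> (\<forall>\<tau> ob. d \<tau> ob \<in> set_pmf (Ag \<tau> ob))"

definition induced_post_shield :: "('o, 'a) agent \<Rightarrow> ('o, 'a) det_agent \<Rightarrow> ('o, 'a) post_shield" where
  "induced_post_shield Ag d = (\<lambda>\<tau> ob a. if a \<in> set_pmf (Ag \<tau> ob) then a else d \<tau> ob)"

definition agents_pre :: "('o, 'a) pre_shield \<Rightarrow> ('o, 'a) agent set" where
  "agents_pre Sh = {Ag. induced_pre_shield Ag = Sh}"

definition agents_post :: "('o, 'a) post_shield \<Rightarrow> ('o, 'a) agent set" where
  "agents_post Sh = {Ag. \<exists>d. is_determinization Ag d \<and> induced_post_shield Ag d = Sh}"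

end

theory Submission
  imports Defs
begin

definition mixp :: "'a pmf \<Rightarrow> 'a \<Rightarrow> 'a pmf" where
  "mixp p x = bind_pmf (bernoulli_pmf (1/2)) (\<lambda>b. if b then p else return_pmf x)"

lemma mixp_pmf: "pmf (mixp p x) x = (pmf p x + 1)/2"
  unfolding mixp_def by (simp add: pmf_bind integral_bernoulli_pmf indicator_def)

lemma mixp_set: "x \<in> set_pmf p \<Longrightarrow> set_pmf (mixp p x) = set_pmf p"
  unfolding mixp_def by (auto simp: set_bind_pmf split: if_splits)

lemma mixp_neq:
  assumes "x \<in> set_pmf p" "y \<in> set_pmf p" "x \<noteq> y"
  shows "mixp p x \<noteq> p"
proof
  assume "mixp p x = p"
  then have a1: "pmf p x = 1" using mixp_pmf[of p x] by simp
  have "measure p {x,y} = pmf p x + pmf p y"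
    using assms(3) by (simp add: measure_pmf.finite_measure_eq_sum_singleton measure_pmf_single)
  moreover have "measure p {x,y} \<le> 1" by simp
  moreover have "pmf p y > 0" using assms(2) by (simp add: pmf_positive)
  ultimately show False using a1 by simp
qed

theorem lemma3p1:
  fixes \<delta> :: nat
  assumes "1 \<le> \<delta>"
  shows "(\<forall>Sh :: ('o, 'a) pre_shield.
            agents_pre Sh \<noteq> {} \<and> agents_pre Sh \<subseteq> clock_agents \<delta> \<longrightarrow>
            (\<forall>\<tau> as os os' ob ob'.
               length as = \<delta> - 1 \<longrightarrow> length os = \<delta> - 1 \<longrightarrow> length os' = \<delta> - 1 \<longrightarrow>
               Sh (\<tau> @ zip os as) ob = Sh (\<tau> @ zip os' as) ob'))
       \<and> (\<forall>Sh :: ('o, 'a) post_shield.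
            agents_post Sh \<noteq> {} \<and> agents_post Sh \<subseteq> clock_agents \<delta> \<longrightarrow>
            (\<forall>\<tau> as os os' ob ob' a.
               length as = \<delta> - 1 \<longrightarrow> length os = \<delta> - 1 \<longrightarrow> length os' = \<delta> - 1 \<longrightarrow>
               Sh (\<tau> @ zip os as) ob a = Sh (\<tau> @ zip os' as) ob' a))"
proof (intro conjI allI impI)
  fix Sh :: "('o, 'a) pre_shield" and \<tau> :: "('o \<times> 'a) list" and "as" :: "'a list" and os os' :: "'o list" and ob ob' :: 'o
  assume h: "agents_pre Sh \<noteq> {} \<and> agents_pre Sh \<subseteq> clock_agents \<delta>"
    and l: "length as = \<delta> - 1" "length os = \<delta> - 1" "length os' = \<delta> - 1"
  then obtain Ag where Ag: "Ag \<in> agents_pre Sh" by blast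
  with h have "Ag \<in> clock_agents \<delta>" by blast
  with l have "Ag (\<tau> @ zip os as) ob = Ag (\<tau> @ zip os' as) ob'"
    unfolding clock_agents_def by blast
  moreover have "Sh = (\<lambda>\<tau> ob. set_pmf (Ag \<tau> ob))"
    using Ag unfolding agents_pre_def induced_pre_shield_def by simp
  ultimately show "Sh (\<tau> @ zip os as) ob = Sh (\<tau> @ zip os' as) ob'" by simp
next
  fix Sh :: "('o, 'a) post_shield" and \<tau> :: "('o \<times> 'a) list" and "as" :: "'a list" and os os' :: "'o list" and ob ob' :: 'o and a :: 'a
  assume h: "agents_post Sh \<noteq> {} \<and> agents_post Sh \<subseteq> clock_agents \<delta>"
    and l: "length as = \<delta> - 1" "length os = \<delta> - 1" "length os' = \<delta> - 1"
  define h1 where "h1 = \<tau> @ zip os as"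
  define h2 where "h2 = \<tau> @ zip os' as"
  show "Sh (\<tau> @ zip os as) ob a = Sh (\<tau> @ zip os' as) ob' a"
  proof (cases "h1 = h2 \<and> ob = ob'")
    case True
    then show ?thesis unfolding h1_def h2_def by simp
  next
    case diff: False
    from h obtain Ag where Ag: "Ag \<in> agents_post Sh" by blast
    then obtain d where d: "is_determinization Ag d" "induced_post_shield Ag d = Sh"
      unfolding agents_post_def by blast
    have clk: "\<And>A. A \<in> agents_post Sh \<Longrightarrow> A h1 ob = A h2 ob'"
    proof -
      fix A assume "A \<in> agents_post Sh"
      with h have "A \<in> clock_agents \<delta>" by blast
      with l show "A h1 ob = A h2 ob'" unfolding clock_agents_def h1_def h2_def by blast
    qed
    have eq: "Ag h1 ob = Ag h2 ob'" using clk[OF Ag] .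
    have dx: "d h1 ob \<in> set_pmf (Ag h1 ob)" using d(1) unfolding is_determinization_def by blast
    have dy: "d h2 ob' \<in> set_pmf (Ag h2 ob')" using d(1) unfolding is_determinization_def by blast
    have single: "set_pmf (Ag h1 ob) = {d h1 ob}"
    proof (rule ccontr)
      assume "set_pmf (Ag h1 ob) \<noteq> {d h1 ob}"
      with dx obtain y where y: "y \<in> set_pmf (Ag h1 ob)" "y \<noteq> d h1 ob" by blast
      define Ag' where "Ag' = (\<lambda>g o'. if g = h1 \<and> o' = ob then mixp (Ag h1 ob) (d h1 ob) else Ag g o')"
      have sp: "\<And>g o'. set_pmf (Ag' g o') = set_pmf (Ag g o')"
        unfolding Ag'_def using mixp_set[OF dx] by auto
      have "is_determinization Ag' d" using d(1) sp unfolding is_determinization_def by simp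
      moreover have "induced_post_shield Ag' d = Sh" using d(2) sp
        unfolding induced_post_shield_def by simp
      ultimately have "Ag' \<in> agents_post Sh" unfolding agents_post_def by blast
      then have "Ag' h1 ob = Ag' h2 ob'" by (rule clk)
      moreover have "Ag' h1 ob = mixp (Ag h1 ob) (d h1 ob)" unfolding Ag'_def by simp
      moreover have "Ag' h2 ob' = Ag h2 ob'" unfolding Ag'_def using diff by auto
      ultimately have "mixp (Ag h1 ob) (d h1 ob) = Ag h1 ob" using eq by simp
      with mixp_neq[OF dx y(1)] y(2) show False by blast
    qed
    have single2: "set_pmf (Ag h2 ob') = {d h2 ob'}" using dy eq single by simp
    have same: "d h1 ob = d h2 ob'" using single single2 eq by simp
    have "Sh h1 ob a = d h1 ob"
      using single unfolding d(2)[symmetric] induced_post_shield_def by simp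
    moreover have "Sh h2 ob' a = d h2 ob'"
      using single2 unfolding d(2)[symmetric] induced_post_shield_def by simp
    ultimately show ?thesis using same unfolding h1_def h2_def by simp
  qed
qed

end
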